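(* Consider the two-unicast wireline network ("butterfly network 1") with nodes $\mathsf{S}_1,\mathsf{S}_2,\mathsf{M}_1,\mathsf{M}_2,\mathsf{D}_1,\mathsf{D}_2$ and seven directed edges: edge 1 from $\mathsf{S}_1$ to $\mathsf{M}_1$, edge 2 from $\mathsf{S}_2$ to $\mathsf{M}_1$, edge 3 from $\mathsf{M}_1$ to $\mathsf{M}_2$, edge 4 from $\mathsf{S}_1$ to $\mathsf{D}_2$, edge 5 from $\mathsf{S}_2$ to $\mathsf{D}_1$, edge 6 from $\mathsf{M}_2$ to $\mathsf{D}_2$, edge 7 from $\mathsf{M}_2$ to $\mathsf{D}_1$, where edge $i$ has capacity $\mathsf{C}_i\ge 0$. Then every nonnegative rate pair $(R_1,R_2)$ satisfying $$R_1\le \min\{\mathsf{C}_1,\mathsf{C}_7\},\quad R_2\le \min\{\mathsf{C}_2,\mathsf{C}_6\},$$ $$R_1+R_2\le \mathsf{C}_3+\min\{R_2,\mathsf{C}_4,\mathsf{C}_5\},\quad R_1+R_2\le \mathsf{C}_3+\min\{R_1,\mathsf{C}_4,\mathsf{C}_5\}$$ is achievable (without security constraints).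
   Context: Network model: a directed acyclic graph; each edge $e$ is a noiseless orthogonal channel of capacity $\mathsf{C}_e$, carrying symbols from $\mathbb{F}_q$ (over $n$ channel uses edge $e$ carries a word $X_e^n$ of at most $n\mathsf{C}_e$ $q$-ary symbols' worth of information; received $Y_e^n=X_e^n$). Source $\mathsf{S}_i$ ($i=1,2$) has a message $W_i$, uniform, with $q$-ary entropy $nR_i$, $W_1,W_2$ independent; $W_i$ must be decoded at $\mathsf{D}_i$. A rate pair $(R_1,R_2)$ is achievable if for some block length $n$ there are encoding functions for every edge—an edge leaving $\mathsf{S}_i$ carries a function of $W_i$ only, and any other edge carries a function of the symbols received on the incoming edges of its tail node—and decoding functions $\phi_j$ applied to the symbols received on the incoming edges of $\mathsf{D}_j$ such that $\mathsf{D}_j$ recovers $W_j$ with vanishing error probability, $j=1,2$. *)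

theory Defs
  imports Complex_Main "HOL-Computational_Algebra.Primes"
begin

text \<open>Capacities C e (e = 1..7), measured in q-ary symbols
 per channel use.  A block-length-n code: message sets {..<M1}, {..<M2};
 edge e carries a symbol from {..<L e} with L e \<le> q^(n C e);
 x1,x4 are functions of W1; x2,x5 of W2; x3 of (x1,x2); x6,x7 of x3;
 D1 decodes from (x5,x7), D2 from (x4,x6).\<close>

definition bf1_code ::
  "nat \<Rightarrow> nat \<Rightarrow> (nat \<Rightarrow> real) \<Rightarrow> nat \<Rightarrow> nat \<Rightarrow>
   (nat \<Rightarrow> nat) \<Rightarrow> (nat \<Rightarrow> nat) \<Rightarrow> (nat \<Rightarrow> nat \<Rightarrow> nat) \<Rightarrow>
   (nat \<Rightarrow> nat) \<Rightarrow> (nat \<Rightarrow> nat) \<Rightarrow> (nat \<Rightarrow> nat) \<Rightarrow> (nat \<Rightarrow> nat) \<Rightarrow> bool" where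
  "bf1_code q n C M1 M2 x1 x2 x3 x4 x5 x6 x7 \<longleftrightarrow>
     (\<exists>L :: nat \<Rightarrow> nat.
        (\<forall>e\<in>{1..7}. real (L e) \<le> real q powr (real n * C e)) \<and>
        (\<forall>w1<M1. x1 w1 < L 1 \<and> x4 w1 < L 4) \<and>
        (\<forall>w2<M2. x2 w2 < L 2 \<and> x5 w2 < L 5) \<and>
        (\<forall>a<L 1. \<forall>b<L 2. x3 a b < L 3) \<and>
        (\<forall>c<L 3. x6 c < L 6 \<and> x7 c < L 7))"

definition bf1_err1 ::
  "nat \<Rightarrow> nat \<Rightarrow> (nat \<Rightarrow> nat) \<Rightarrow> (nat \<Rightarrow> nat) \<Rightarrow> (nat \<Rightarrow> nat \<Rightarrow> nat) \<Rightarrow>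
   (nat \<Rightarrow> nat) \<Rightarrow> (nat \<Rightarrow> nat) \<Rightarrow> (nat \<Rightarrow> nat \<Rightarrow> nat) \<Rightarrow> nat" where
  "bf1_err1 M1 M2 x1 x2 x3 x5 x7 \<phi>1 =
     card {(w1, w2). w1 < M1 \<and> w2 < M2 \<and> \<phi>1 (x5 w2) (x7 (x3 (x1 w1) (x2 w2))) \<noteq> w1}"

definition bf1_err2 ::
  "nat \<Rightarrow> nat \<Rightarrow> (nat \<Rightarrow> nat) \<Rightarrow> (nat \<Rightarrow> nat) \<Rightarrow> (nat \<Rightarrow> nat \<Rightarrow> nat) \<Rightarrow>
   (nat \<Rightarrow> nat) \<Rightarrow> (nat \<Rightarrow> nat) \<Rightarrow> (nat \<Rightarrow> nat \<Rightarrow> nat) \<Rightarrow> nat" where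
  "bf1_err2 M1 M2 x1 x2 x3 x4 x6 \<phi>2 =
     card {(w1, w2). w1 < M1 \<and> w2 < M2 \<and> \<phi>2 (x4 w1) (x6 (x3 (x1 w1) (x2 w2))) \<noteq> w2}"

text \<open>(R1,R2) achievable: for every \<epsilon> > 0 there is a block length n and a code
 with at least q^(n(R_i - \<epsilon>)) messages for source i and error probability
 at most \<epsilon> at each destination (messages uniform and independent).\<close>
definition bf1_achievable :: "nat \<Rightarrow> (nat \<Rightarrow> real) \<Rightarrow> real \<Rightarrow> real \<Rightarrow> bool" where
  "bf1_achievable q C R1 R2 \<longleftrightarrow>
     (\<forall>\<epsilon>>0. \<exists>n>0. \<exists>M1 M2 x1 x2 x3 x4 x5 x6 x7 \<phi>1 \<phi>2.
        bf1_code q n C M1 M2 x1 x2 x3 x4 x5 x6 x7 \<and>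
        real M1 \<ge> real q powr (real n * (R1 - \<epsilon>)) \<and>
        real M2 \<ge> real q powr (real n * (R2 - \<epsilon>)) \<and>
        real (bf1_err1 M1 M2 x1 x2 x3 x5 x7 \<phi>1) \<le> \<epsilon> * real (M1 * M2) \<and>
        real (bf1_err2 M1 M2 x1 x2 x3 x4 x6 \<phi>2) \<le> \<epsilon> * real (M1 * M2))"

end

theory Submission
  imports Defs
begin

lemma lt_aux: "(s::nat) < A \<Longrightarrow> k < K \<Longrightarrow> s + A*k < A*K"
proof -
  assume "s < A" "k < K"
  then have "s + A*k < A*(k+1)" by simp
  also have "A*(k+1) \<le> A*K" using \<open>k<K\<close> by (intro mult_le_mono2) simp
  finally show ?thesis .
qed

lemma modsub_aux: "(a1::nat) < A \<Longrightarrow> a2 < A \<Longrightarrow> ((a1+a2) mod A + A - a2) mod A = a1"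
proof (cases "a1 + a2 < A")
  case True
  assume "a1 < A" "a2 < A"
  then show ?thesis using True by simp
next
  case False
  assume h: "a1 < A" "a2 < A"
  have "(a1+a2) mod A = a1 + a2 - A"
    using False h by (simp add: mod_if)
  then show ?thesis using h False by simp
qed

lemma modsub_aux2: "(a1::nat) < A \<Longrightarrow> a2 < A \<Longrightarrow> ((a1+a2) mod A + A - a1) mod A = a2"
  using modsub_aux[of a2 A a1] by (simp add: add.commute)

lemma construct:
  fixes A B1 B2 :: nat
  assumes pos: "A>0" "B1>0" "B2>0"
    and b1: "real (A*B1) \<le> real q powr (real n*C 1)"
    and b2: "real (A*B2) \<le> real q powr (real n*C 2)"
    and b3: "real (A*B1*B2) \<le> real q powr (real n*C 3)"
    and b4: "real A \<le> real q powr (real n*C 4)"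
    and b5: "real A \<le> real q powr (real n*C 5)"
    and b6: "real (A*B2) \<le> real q powr (real n*C 6)"
    and b7: "real (A*B1) \<le> real q powr (real n*C 7)"
  shows "\<exists>x1 x2 x3 x4 x5 x6 x7 \<phi>1 \<phi>2. bf1_code q n C (A*B1) (A*B2) x1 x2 x3 x4 x5 x6 x7 \<and>
     bf1_err1 (A*B1) (A*B2) x1 x2 x3 x5 x7 \<phi>1 = 0 \<and> bf1_err2 (A*B1) (A*B2) x1 x2 x3 x4 x6 \<phi>2 = 0"
proof -
  define x3 where "x3 = (\<lambda>a b. ((a mod A + b mod A) mod A) + A*(a div A + B1*(b div A)))"
  define x7 where "x7 = (\<lambda>c. c mod A + A*((c div A) mod B1))"
  define x6 where "x6 = (\<lambda>c. c mod A + A*((c div A) div B1))"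
  define ph where "ph = (\<lambda>u v. (v mod A + A - u) mod A + A*(v div A))"
  define x4 where "x4 = (\<lambda>w::nat. w mod A)"
  define L where "L = (\<lambda>e. [0, A*B1, A*B2, A*B1*B2, A, A, A*B2, A*B1] ! e)"
  have x3lt: "x3 a b < A*B1*B2" if "a < A*B1" "b < A*B2" for a b
  proof -
    have "a div A < B1" using that pos by (simp add: less_mult_imp_div_less mult.commute)
    moreover have "b div A < B2" using that pos by (simp add: less_mult_imp_div_less mult.commute)
    ultimately have "a div A + B1*(b div A) < B1*B2"
      using lt_aux[of "a div A" B1 "b div A" B2] by simp
    then show ?thesis unfolding x3_def using lt_aux pos
      by (metis mod_less_divisor mult.assoc)
  qed
  have x7lt: "x7 c < A*B1" for c
    unfolding x7_def using lt_aux pos by simp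
  have x6lt: "x6 c < A*B2" if "c < A*B1*B2" for c
  proof -
    have "c div A < B1*B2" using that pos
      by (metis less_mult_imp_div_less mult.assoc mult.commute)
    then have "c div A div B1 < B2" using pos
      by (metis less_mult_imp_div_less mult.commute)
    then show ?thesis unfolding x6_def using lt_aux pos by simp
  qed
  have dec: "ph (w2 mod A) (x7 (x3 w1 w2)) = w1 \<and> ph (w1 mod A) (x6 (x3 w1 w2)) = w2"
    if "w1 < A*B1" "w2 < A*B2" for w1 w2
  proof -
    have d1: "w1 div A < B1" using that pos by (simp add: less_mult_imp_div_less mult.commute)
    let ?s = "(w1 mod A + w2 mod A) mod A"
    have m: "x3 w1 w2 mod A = ?s" unfolding x3_def by simp
    have d: "x3 w1 w2 div A = w1 div A + B1*(w2 div A)" unfolding x3_def using pos by simp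
    have e7: "x7 (x3 w1 w2) = ?s + A*(w1 div A)" unfolding x7_def m d using d1 by simp
    have e6: "x6 (x3 w1 w2) = ?s + A*(w2 div A)" unfolding x6_def m d using d1 pos by simp
    have "ph (w2 mod A) (x7 (x3 w1 w2)) = w1 mod A + A*(w1 div A)"
      unfolding e7 ph_def using pos modsub_aux[of "w1 mod A" A "w2 mod A"] by simp
    moreover have "ph (w1 mod A) (x6 (x3 w1 w2)) = w2 mod A + A*(w2 div A)"
      unfolding e6 ph_def using pos modsub_aux2[of "w1 mod A" A "w2 mod A"] by simp
    ultimately show ?thesis by simp
  qed
  have code: "bf1_code q n C (A*B1) (A*B2) id id x3 x4 x4 x6 x7"
    unfolding bf1_code_def
  proof (rule exI[of _ L], intro conjI)
    show "\<forall>e\<in>{1..7}. real (L e) \<le> real q powr (real n * C e)"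
    proof
      fix e :: nat assume "e \<in> {1..7}"
      then have "e = 1 \<or> e = 2 \<or> e = 3 \<or> e = 4 \<or> e = 5 \<or> e = 6 \<or> e = 7" by auto
      then show "real (L e) \<le> real q powr (real n * C e)"
        using b1 b2 b3 b4 b5 b6 b7 unfolding L_def by (auto simp: numeral_eq_Suc)
    qed
  qed (auto simp: L_def x4_def x3lt x7lt x6lt pos numeral_eq_Suc)
  have "bf1_err1 (A*B1) (A*B2) id id x3 x4 x7 ph = 0"
    proof -
    have "{(w1, w2). w1 < A*B1 \<and> w2 < A*B2 \<and> ph (x4 w2) (x7 (x3 w1 w2)) \<noteq> w1} = {}"
      unfolding x4_def using dec by auto
    then show ?thesis unfolding bf1_err1_def id_apply by (simp only: card.empty)
  qed
  moreover have "bf1_err2 (A*B1) (A*B2) id id x3 x4 x6 ph = 0"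
    proof -
    have "{(w1, w2). w1 < A*B1 \<and> w2 < A*B2 \<and> ph (x4 w1) (x6 (x3 w1 w2)) \<noteq> w2} = {}"
      unfolding x4_def using dec by auto
    then show ?thesis unfolding bf1_err2_def id_apply by (simp only: card.empty)
  qed
  ultimately show ?thesis using code by blast
qed

lemma floor_aux:
  fixes x :: real assumes "x \<ge> 1"
  shows "real (nat \<lfloor>x\<rfloor>) \<le> x" "x/2 \<le> real (nat \<lfloor>x\<rfloor>)" "nat \<lfloor>x\<rfloor> > 0"
proof -
  have f: "real_of_int \<lfloor>x\<rfloor> \<le> x" "x < real_of_int \<lfloor>x\<rfloor> + 1" by linarith+
  have g: "\<lfloor>x\<rfloor> \<ge> 1" using assms by linarith
  then have e: "real (nat \<lfloor>x\<rfloor>) = real_of_int \<lfloor>x\<rfloor>" by simp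
  show "real (nat \<lfloor>x\<rfloor>) \<le> x" using e f by simp
  show "x/2 \<le> real (nat \<lfloor>x\<rfloor>)" using e f g by linarith
  show "nat \<lfloor>x\<rfloor> > 0" using g by simp
qed

theorem theorem1:
  fixes q :: nat and C :: "nat \<Rightarrow> real" and R1 R2 :: real
  assumes "\<exists>p k. prime p \<and> k > 0 \<and> q = p ^ k"
    and "\<forall>e\<in>{1..7}. C e \<ge> 0"
    and "R1 \<ge> 0" and "R2 \<ge> 0"
    and "R1 \<le> min (C 1) (C 7)"
    and "R2 \<le> min (C 2) (C 6)"
    and "R1 + R2 \<le> C 3 + min R2 (min (C 4) (C 5))"
    and "R1 + R2 \<le> C 3 + min R1 (min (C 4) (C 5))"
  shows "bf1_achievable q C R1 R2"
  unfolding bf1_achievable_def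
proof (intro allI impI)
  fix \<epsilon> :: real assume ep: "\<epsilon> > 0"
  obtain p k where pk: "prime p" "k > 0" "q = p ^ k" using assms(1) by blast
  have "p \<ge> 2" using pk prime_ge_2_nat by blast
  moreover have "p \<le> p ^ k" using pk \<open>p \<ge> 2\<close> by (intro self_le_power) auto
  ultimately have q2: "q \<ge> 2" using pk by simp
  then have q2r: "real q \<ge> 2" by simp
  define n where "n = nat \<lceil>2/\<epsilon>\<rceil> + 1"
  have npos: "n > 0" unfolding n_def by simp
  have "real n \<ge> 2/\<epsilon>" unfolding n_def by linarith
  then have ne: "real n * \<epsilon> \<ge> 2" using ep by (simp add: field_simps)
  define P where "P = (\<lambda>x. real q powr (real n * x))"
  have Padd: "P (a + b) = P a * P b" for a b
    unfolding P_def by (simp add: distrib_left powr_add)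
  have Pmono: "a \<le> b \<Longrightarrow> P a \<le> P b" for a b
    unfolding P_def using q2r by (intro powr_mono) (auto intro: mult_left_mono)
  have P0: "P 0 = 1" unfolding P_def using q2 by simp
  have Pge1: "x \<ge> 0 \<Longrightarrow> P x \<ge> 1" for x using Pmono[of 0 x] P0 by simp
  have Ppos: "P x > 0" for x unfolding P_def using q2 by simp
  have "P \<epsilon> \<ge> real q powr 2" unfolding P_def using q2r ne by (intro powr_mono) auto
  moreover have "real q powr 2 = real q ^ 2" using q2 by (simp add: powr_realpow)
  moreover have "real q ^ 2 \<ge> 4" 
  proof -
    have "(2::real)^2 \<le> real q ^ 2" using q2r by (intro power_mono) auto
    then show ?thesis by simp
  qed
  ultimately have Pe: "P \<epsilon> \<ge> 4" by linarith
  define m where "m = min (min R1 R2) (min (C 4) (C 5))"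
  have C4: "C 4 \<ge> 0" "C 5 \<ge> 0" using assms(2) by auto
  have m0: "m \<ge> 0" "m \<le> R1" "m \<le> R2" "m \<le> C 4" "m \<le> C 5"
    unfolding m_def using assms(3,4) C4 by auto
  have m3: "R1 + R2 - m \<le> C 3" unfolding m_def using assms(7,8) by (auto simp: min_def)
  define A where "A = nat \<lfloor>P m\<rfloor>"
  define B1 where "B1 = nat \<lfloor>P (R1 - m)\<rfloor>"
  define B2 where "B2 = nat \<lfloor>P (R2 - m)\<rfloor>"
  have fA: "real A \<le> P m" "P m / 2 \<le> real A" "A > 0"
    unfolding A_def using floor_aux[OF Pge1[OF m0(1)]] by auto
  have fB1: "real B1 \<le> P (R1-m)" "P (R1-m) / 2 \<le> real B1" "B1 > 0"
    unfolding B1_def using floor_aux[OF Pge1[of "R1-m"]] m0 by auto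
  have fB2: "real B2 \<le> P (R2-m)" "P (R2-m) / 2 \<le> real B2" "B2 > 0"
    unfolding B2_def using floor_aux[OF Pge1[of "R2-m"]] m0 by auto
  have e1: "P R1 = P m * P (R1 - m)" using Padd[of m "R1-m"] by simp
  have e2: "P R2 = P m * P (R2 - m)" using Padd[of m "R2-m"] by simp
  have e3: "P (R1+R2-m) = P m * P (R1 - m) * P (R2 - m)"
    using Padd[of m "R1-m"] Padd[of R1 "R2-m"] by (simp add: add_diff_eq)
  have u1: "real (A*B1) \<le> P R1" unfolding e1 of_nat_mult
    using fA fB1 by (intro mult_mono) auto
  have u2: "real (A*B2) \<le> P R2" unfolding e2 of_nat_mult
    using fA fB2 by (intro mult_mono) auto
  have u3: "real (A*B1*B2) \<le> P (R1+R2-m)" unfolding e3 of_nat_mult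
    using fA fB1 fB2 u1 by (intro mult_mono) auto
  have l1: "P R1 / 4 \<le> real (A*B1)"
  proof -
    have "P m / 2 * (P (R1-m) / 2) \<le> real A * real B1"
      using fA fB1 Ppos by (intro mult_mono) (auto simp: less_imp_le)
    then show ?thesis unfolding e1 by simp
  qed
  have l2: "P R2 / 4 \<le> real (A*B2)"
  proof -
    have "P m / 2 * (P (R2-m) / 2) \<le> real A * real B2"
      using fA fB2 Ppos by (intro mult_mono) (auto simp: less_imp_le)
    then show ?thesis unfolding e2 by simp
  qed
  have d: "P (R - \<epsilon>) \<le> P R / 4" for R
  proof -
    have "P R = P (R - \<epsilon>) * P \<epsilon>" using Padd[of "R-\<epsilon>" \<epsilon>] by simp
    moreover have "P (R - \<epsilon>) * 4 \<le> P (R - \<epsilon>) * P \<epsilon>"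
      using Pe Ppos[of "R-\<epsilon>"] by (intro mult_left_mono) auto
    ultimately show ?thesis by simp
  qed
  have "\<exists>x1 x2 x3 x4 x5 x6 x7 \<phi>1 \<phi>2. bf1_code q n C (A*B1) (A*B2) x1 x2 x3 x4 x5 x6 x7 \<and>
     bf1_err1 (A*B1) (A*B2) x1 x2 x3 x5 x7 \<phi>1 = 0 \<and> bf1_err2 (A*B1) (A*B2) x1 x2 x3 x4 x6 \<phi>2 = 0"
  proof (rule construct)
    show "A>0" "B1>0" "B2>0" using fA fB1 fB2 by auto
    show "real (A*B1) \<le> real q powr (real n*C 1)"
      using u1 Pmono[of R1 "C 1"] assms(5) unfolding P_def by auto
    show "real (A*B1) \<le> real q powr (real n*C 7)"
      using u1 Pmono[of R1 "C 7"] assms(5) unfolding P_def by auto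
    show "real (A*B2) \<le> real q powr (real n*C 2)"
      using u2 Pmono[of R2 "C 2"] assms(6) unfolding P_def by auto
    show "real (A*B2) \<le> real q powr (real n*C 6)"
      using u2 Pmono[of R2 "C 6"] assms(6) unfolding P_def by auto
    show "real (A*B1*B2) \<le> real q powr (real n*C 3)"
      using u3 Pmono[of "R1+R2-m" "C 3"] m3 unfolding P_def by auto
    show "real A \<le> real q powr (real n*C 4)"
      using fA Pmono[of m "C 4"] m0 unfolding P_def by auto
    show "real A \<le> real q powr (real n*C 5)"
      using fA Pmono[of m "C 5"] m0 unfolding P_def by auto
  qed
  then obtain x1 x2 x3 x4 x5 x6 x7 \<phi>1 \<phi>2 where
    c: "bf1_code q n C (A*B1) (A*B2) x1 x2 x3 x4 x5 x6 x7"
    "bf1_err1 (A*B1) (A*B2) x1 x2 x3 x5 x7 \<phi>1 = 0" "bf1_err2 (A*B1) (A*B2) x1 x2 x3 x4 x6 \<phi>2 = 0"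
    by blast
  have r1: "real (A*B1) \<ge> real q powr (real n * (R1 - \<epsilon>))"
    using d[of R1] l1 unfolding P_def by linarith
  have r2: "real (A*B2) \<ge> real q powr (real n * (R2 - \<epsilon>))"
    using d[of R2] l2 unfolding P_def by linarith
  have z: "0 \<le> \<epsilon> * real (A*B1 * (A*B2))" using ep by simp
  show "\<exists>n>0. \<exists>M1 M2 x1 x2 x3 x4 x5 x6 x7 \<phi>1 \<phi>2.
        bf1_code q n C M1 M2 x1 x2 x3 x4 x5 x6 x7 \<and>
        real M1 \<ge> real q powr (real n * (R1 - \<epsilon>)) \<and>
        real M2 \<ge> real q powr (real n * (R2 - \<epsilon>)) \<and>
        real (bf1_err1 M1 M2 x1 x2 x3 x5 x7 \<phi>1) \<le> \<epsilon> * real (M1 * M2) \<and>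
        real (bf1_err2 M1 M2 x1 x2 x3 x4 x6 \<phi>2) \<le> \<epsilon> * real (M1 * M2)"
    apply (rule exI[of _ n])
    apply (rule conjI[OF npos])
    apply (rule exI[of _ "A*B1"], rule exI[of _ "A*B2"])
    apply (rule exI[of _ x1], rule exI[of _ x2], rule exI[of _ x3], rule exI[of _ x4], rule exI[of _ x5],
       rule exI[of _ x6], rule exI[of _ x7], rule exI[of _ \<phi>1], rule exI[of _ \<phi>2])
    using c r1 r2 z by simp
qed

end
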